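(* Let $G$ be a connected graph with detour sequence $D: d_1,d_2,\ldots,d_n$. Then $\max_{2\le i\le n}\{d_i-d_{i-1}\} \le \left\lfloor \frac{\tau(G)}{2} \right\rfloor$.
   Context: All graphs are finite and simple. The order of a path is its number of vertices. For a vertex $v$ of $G$, $\tau(v)$ is the order of a longest path in $G$ having $v$ as an endvertex, and $\tau(G)$ is the order of a longest path in $G$. The detour sequence of $G$ is the nondecreasing sequence $d_1\le d_2\le\cdots\le d_n$ of the values $\tau(v)$, $v\in V(G)$, where $n=|V(G)|$. The quantity $\max_{2\le i\le n}\{d_i-d_{i-1}\}$ is called the maximum gap of $D$. *)

theory Defs
  imports Main "HOL-Library.Multiset"
begin

definition simple_graph :: "'a set \<Rightarrow> ('a \<Rightarrow> 'a \<Rightarrow> bool) \<Rightarrow> bool" where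
  "simple_graph V E \<longleftrightarrow> finite V \<and> (\<forall>x y. E x y \<longrightarrow> x \<in> V \<and> y \<in> V)
     \<and> (\<forall>x y. E x y \<longrightarrow> E y x) \<and> (\<forall>x. \<not> E x x)"

definition is_path :: "'a set \<Rightarrow> ('a \<Rightarrow> 'a \<Rightarrow> bool) \<Rightarrow> 'a list \<Rightarrow> bool" where
  "is_path V E p \<longleftrightarrow> p \<noteq> [] \<and> set p \<subseteq> V \<and> distinct p
     \<and> (\<forall>i. Suc i < length p \<longrightarrow> E (p ! i) (p ! Suc i))"

definition connected_graph :: "'a set \<Rightarrow> ('a \<Rightarrow> 'a \<Rightarrow> bool) \<Rightarrow> bool" where
  "connected_graph V E \<longleftrightarrow> V \<noteq> {} \<and>
     (\<forall>u\<in>V. \<forall>v\<in>V. \<exists>p. is_path V E p \<and> hd p = u \<and> last p = v)"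

definition tau_v :: "'a set \<Rightarrow> ('a \<Rightarrow> 'a \<Rightarrow> bool) \<Rightarrow> 'a \<Rightarrow> nat" where
  "tau_v V E v = Max {length p | p. is_path V E p \<and> (hd p = v \<or> last p = v)}"

definition tau_G :: "'a set \<Rightarrow> ('a \<Rightarrow> 'a \<Rightarrow> bool) \<Rightarrow> nat" where
  "tau_G V E = Max {length p | p. is_path V E p}"

definition detour_seq :: "'a set \<Rightarrow> ('a \<Rightarrow> 'a \<Rightarrow> bool) \<Rightarrow> nat list" where
  "detour_seq V E = sorted_list_of_multiset (image_mset (tau_v V E) (mset_set V))"

end

theory Submission
  imports Defs
begin

lemma path_len_le:
  assumes "simple_graph V E" "is_path V E p"
  shows "length p \<le> card V"
proof -
  have "length p = card (set p)" using assms(2) distinct_card unfolding is_path_def by metis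
  also have "\<dots> \<le> card V" using assms unfolding is_path_def simple_graph_def
    by (intro card_mono) auto
  finally show ?thesis .
qed

lemma path_drop:
  assumes "is_path V E p" "n < length p"
  shows "is_path V E (drop n p)"
  using assms unfolding is_path_def
  by (auto dest: in_set_dropD simp: add.commute)

lemma path_take:
  assumes "is_path V E p" "0 < n"
  shows "is_path V E (take n p)"
  using assms unfolding is_path_def
  by (auto dest: in_set_takeD)

lemma path_rev:
  assumes "simple_graph V E" "is_path V E p"
  shows "is_path V E (rev p)"
  unfolding is_path_def
proof (intro conjI allI impI)
  show "rev p \<noteq> []" "set (rev p) \<subseteq> V" "distinct (rev p)"
    using assms(2) unfolding is_path_def by auto
  fix i assume i: "Suc i < length (rev p)"
  have "E (p ! (length p - Suc (Suc i))) (p ! Suc (length p - Suc (Suc i)))"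
    using assms(2) i unfolding is_path_def by auto
  moreover have "Suc (length p - Suc (Suc i)) = length p - Suc i" using i by simp
  ultimately have "E (p ! (length p - Suc (Suc i))) (p ! (length p - Suc i))" by simp
  hence "E (p ! (length p - Suc i)) (p ! (length p - Suc (Suc i)))"
    using assms(1) unfolding simple_graph_def by blast
  thus "E (rev p ! i) (rev p ! Suc i)" using i by (simp add: rev_nth)
qed

lemma path_cons:
  assumes "is_path V E p" "a \<in> V" "a \<notin> set p" "E a (hd p)"
  shows "is_path V E (a # p)"
  unfolding is_path_def
proof (intro conjI allI impI)
  show "a # p \<noteq> []" by simp
  show "set (a # p) \<subseteq> V" "distinct (a # p)" using assms unfolding is_path_def by auto
  fix i assume i: "Suc i < length (a # p)"
  show "E ((a # p) ! i) ((a # p) ! Suc i)"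
  proof (cases i)
    case 0 thus ?thesis using assms by (simp add: hd_conv_nth is_path_def)
  next
    case (Suc j) thus ?thesis using assms i unfolding is_path_def by auto
  qed
qed

lemma path_tl:
  assumes "is_path V E (a # q)" "q \<noteq> []"
  shows "is_path V E q" "E a (hd q)"
proof -
  show "is_path V E q" using assms unfolding is_path_def
    by (auto simp del: nth_Cons_Suc)
  have "E ((a#q) ! 0) ((a#q) ! Suc 0)" using assms unfolding is_path_def by auto
  thus "E a (hd q)" using assms(2) by (simp add: hd_conv_nth)
qed

lemma half_path:
  assumes G: "simple_graph V E" and P: "is_path V E P"
  shows "is_path V E q \<Longrightarrow> set q \<inter> set P \<noteq> {} \<Longrightarrow>
     \<exists>p. is_path V E p \<and> hd p = hd q \<and> set p \<subseteq> set P \<union> set q \<and> length P \<le> 2 * length p"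
proof (induction q)
  case Nil thus ?case by simp
next
  case (Cons a q)
  show ?case
  proof (cases "a \<in> set P")
    case True
    then obtain j where j: "j < length P" "P ! j = a" by (auto simp: in_set_conv_nth)
    show ?thesis
    proof (cases "length P \<le> 2 * (length P - j)")
      case True
      show ?thesis
        by (rule exI[of _ "drop j P"]) (use True j P path_drop in \<open>auto simp: hd_drop_conv_nth dest: in_set_dropD\<close>)
    next
      case False
      have l: "length (rev (take (Suc j) P)) = Suc j" using j by simp
      have h: "hd (rev (take (Suc j) P)) = a" using j
        by (simp add: hd_rev last_conv_nth take_Suc_conv_app_nth)
      show ?thesis
        by (rule exI[of _ "rev (take (Suc j) P)"])
          (use False j h l path_rev[OF G path_take[OF P]] in \<open>auto dest: in_set_takeD\<close>)
    qed
  next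
    case False
    hence ne: "q \<noteq> []" "set q \<inter> set P \<noteq> {}" using Cons.prems by auto
    note qp = path_tl[OF Cons.prems(1) ne(1)]
    obtain p where p: "is_path V E p" "hd p = hd q" "set p \<subseteq> set P \<union> set q" "length P \<le> 2 * length p"
      using Cons.IH[OF qp(1) ne(2)] by blast
    have "a \<notin> set q" "a \<in> V" using Cons.prems(1) unfolding is_path_def by auto
    hence "is_path V E (a # p)" using p False qp(2) by (intro path_cons) auto
    thus ?thesis using p by (intro exI[of _ "a # p"]) auto
  qed
qed

theorem corollary1p5:
  fixes V :: "'a set" and E :: "'a \<Rightarrow> 'a \<Rightarrow> bool"
  assumes "simple_graph V E" and "connected_graph V E"
  shows "\<forall>i. 1 \<le> i \<and> i < length (detour_seq V E) \<longrightarrow>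
           detour_seq V E ! i - detour_seq V E ! (i - 1) \<le> tau_G V E div 2"
proof -
  have G: "simple_graph V E" by fact
  have fin: "finite V" using G simple_graph_def by auto
  define S where "S = {length p | p. is_path V E p}"
  have Sfin: "finite S" unfolding S_def
    by (rule finite_subset[of _ "{..card V}"]) (use path_len_le[OF G] in auto)
  obtain v0 where v0: "v0 \<in> V" using assms(2) unfolding connected_graph_def by auto
  have "is_path V E [v0]" using v0 unfolding is_path_def by auto
  hence "S \<noteq> {}" unfolding S_def by auto
  then obtain P where P: "is_path V E P" "length P = tau_G V E"
    using Max_in[OF Sfin] unfolding tau_G_def S_def[symmetric] by (auto simp: S_def)
  have bounds: "tau_v V E v \<le> tau_G V E \<and> tau_G V E \<le> 2 * tau_v V E v" if v: "v \<in> V" for v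
  proof -
    define T where "T = {length p | p. is_path V E p \<and> (hd p = v \<or> last p = v)}"
    have TS: "T \<subseteq> S" unfolding T_def S_def by auto
    have "is_path V E [v]" using v unfolding is_path_def by auto
    hence Tne: "T \<noteq> {}" unfolding T_def by force
    have Tfin: "finite T" using TS Sfin finite_subset by auto
    have 1: "tau_v V E v \<le> tau_G V E" unfolding tau_v_def tau_G_def T_def[symmetric] S_def[symmetric]
      using Max_mono[OF TS Tne Sfin] .
    have "hd P \<in> V" using P unfolding is_path_def by auto
    then obtain q where q: "is_path V E q" "hd q = v" "last q = hd P"
      using assms(2) v unfolding connected_graph_def by blast
    have "last q \<in> set q" "hd P \<in> set P" using q(1) P(1) unfolding is_path_def by auto
    hence "set q \<inter> set P \<noteq> {}" using q by auto
    then obtain p where p: "is_path V E p" "hd p = v" "length P \<le> 2 * length p"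
      using half_path[OF G P(1) q(1)] q by auto
    have "length p \<in> T" unfolding T_def using p by auto
    hence "length p \<le> tau_v V E v" unfolding tau_v_def T_def[symmetric] using Max_ge[OF Tfin] by auto
    thus ?thesis using 1 p P by auto
  qed
  have setd: "set (detour_seq V E) = tau_v V E ` V"
    unfolding detour_seq_def using fin by simp
  show ?thesis
  proof (intro allI impI)
    fix i assume i: "1 \<le> i \<and> i < length (detour_seq V E)"
    have "detour_seq V E ! i \<in> tau_v V E ` V" "detour_seq V E ! (i - 1) \<in> tau_v V E ` V"
      using i setd nth_mem[of i] nth_mem[of "i - 1"] by (metis less_imp_diff_less)+
    then obtain a b where "a \<in> V" "b \<in> V" "detour_seq V E ! i = tau_v V E a"
      "detour_seq V E ! (i - 1) = tau_v V E b" by blast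
    thus "detour_seq V E ! i - detour_seq V E ! (i - 1) \<le> tau_G V E div 2"
      using bounds[of a] bounds[of b] by auto
  qed
qed

end
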